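(* Let $\nu$ be a compactly supported probability measure on $\mathbb{R}$ with infinite support, let $\beta\in\mathbb{R}$, $\gamma>0$, and let $\mu = \Phi_{\beta,\gamma}[\nu]$. Let $\{P^\mu_n\}_{n\ge0}$ be the monic orthogonal polynomials of $\mu$. Then, for the operator \[ Q = L_\nu L_\mu - \gamma^{-1}(x - \beta) L_\mu \] on $\mathbb{R}[x]$, one has $Q[P^\mu_n] = -\gamma^{-1} P^\mu_n$ for all $n \ge 1$ (and $Q[P^\mu_0] = 0$). Equivalently, $Q[f] = \gamma^{-1}\bigl(-f + \int f\,d\mu\bigr)$ for every polynomial $f$.
   Context: $L_\mu[f](x) = \int \frac{f(x)-f(y)}{x-y}\,d\mu(y)$ on polynomials. For a probability measure $\nu$, $\beta\in\mathbb{R}$, $\gamma>0$, $\Phi_{\beta,\gamma}[\nu]$ is the probability measure $\mu$ with Cauchy transform $G_\mu(z) = 1/(z-\beta-\gamma G_\nu(z))$, where $G_\mu(z)=\int\frac{d\mu(x)}{z-x}$; equivalently, if $\nu$ has Jacobi parameters $(\beta_0,\beta_1,\dots),(\gamma_1,\gamma_2,\dots)$ (meaning its monic orthogonal polynomials satisfy $xP_n = P_{n+1}+\beta_nP_n+\gamma_nP_{n-1}$), then $\mu$ has Jacobi parameters $(\beta,\beta_0,\beta_1,\dots),(\gamma,\gamma_1,\gamma_2,\dots)$. *)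

theory Defs
  imports "HOL-Probability.Probability" "HOL-Computational_Algebra.Polynomial"
begin

definition msupport :: "real measure \<Rightarrow> real set" where
  "msupport M = {x. \<forall>e>0. emeasure M (ball x e) > 0}"

definition cauchy_transform :: "real measure \<Rightarrow> complex \<Rightarrow> complex" where
  "cauchy_transform M z = (\<integral>x. 1 / (z - complex_of_real x) \<partial>M)"

definition diff_quot :: "(real \<Rightarrow> real) \<Rightarrow> real \<Rightarrow> real \<Rightarrow> real" where
  "diff_quot f x y = (if x = y then deriv f x else (f x - f y) / (x - y))"

definition Lop :: "real measure \<Rightarrow> (real \<Rightarrow> real) \<Rightarrow> real \<Rightarrow> real" where
  "Lop M f x = (\<integral>y. diff_quot f x y \<partial>M)"

definition is_Phi :: "real \<Rightarrow> real \<Rightarrow> real measure \<Rightarrow> real measure \<Rightarrow> bool" where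
  "is_Phi \<beta> \<gamma> \<nu> \<mu> \<longleftrightarrow> prob_space \<mu> \<and> sets \<mu> = sets borel \<and>
     (\<forall>z. Im z \<noteq> 0 \<longrightarrow>
        cauchy_transform \<mu> z = 1 / (z - complex_of_real \<beta> - complex_of_real \<gamma> * cauchy_transform \<nu> z))"

definition monic_OP :: "real measure \<Rightarrow> nat \<Rightarrow> real poly" where
  "monic_OP M n = (THE p. degree p = n \<and> lead_coeff p = 1 \<and>
      (\<forall>q. degree q < n \<longrightarrow> (\<integral>x. poly p x * poly q x \<partial>M) = 0))"

end

theory Submission
  imports Defs
begin

lemma deriv_poly': "deriv (poly p) x = poly (pderiv p) x"
  by (rule DERIV_imp_deriv[OF poly_DERIV])

lemma dq_pCons: "diff_quot (poly (pCons a p)) y x = y * diff_quot (poly p) y x + poly p x"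
proof (cases "x = y")
  case True
  then show ?thesis by (simp add: diff_quot_def deriv_poly' pderiv_pCons)
next
  case False
  then have "y - x \<noteq> 0" by simp
  then show ?thesis using False
    by (simp add: diff_quot_def field_simps)
qed

lemma dq_zero: "diff_quot (poly 0) y x = 0"
  by (simp add: diff_quot_def deriv_poly')

lemma dq_mult_zero:
  assumes "poly p x = 0"
  shows "diff_quot (poly (p * h)) y x = poly h y * diff_quot (poly p) y x"
proof (cases "x = y")
  case True
  then show ?thesis using assms by (simp add: diff_quot_def deriv_poly' pderiv_mult)
next
  case False
  then show ?thesis using assms by (simp add: diff_quot_def)
qed

lemma dq_sum:
  "diff_quot (poly p) y x = (\<Sum>k\<le>degree p. coeff p k * (\<Sum>j<k. y^j * x^(k - Suc j)))"
proof (cases "x = y")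
  case True
  have d: "((\<lambda>x. \<Sum>k\<le>degree p. coeff p k * x^k) has_field_derivative
      (\<Sum>k\<le>degree p. coeff p k * (of_nat k * y^(k - 1)))) (at y)"
    by (intro DERIV_sum DERIV_cmult) (auto intro!: derivative_eq_intros)
  have "poly p = (\<lambda>x. \<Sum>k\<le>degree p. coeff p k * x^k)"
    by (rule ext) (simp add: poly_altdef)
  then have "deriv (poly p) y = (\<Sum>k\<le>degree p. coeff p k * (of_nat k * y^(k - 1)))"
    using DERIV_imp_deriv[OF d] by simp
  moreover have "(\<Sum>j<k. y^j * y^(k - Suc j)) = of_nat k * y^(k - 1)" for k
  proof -
    have "(\<Sum>j<k. y^j * y^(k - Suc j)) = (\<Sum>j<k. y^(k - 1))"
      by (rule sum.cong) (auto simp: power_add[symmetric])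
    then show ?thesis by simp
  qed
  ultimately show ?thesis using True by (simp add: diff_quot_def)
next
  case False
  have "poly p y - poly p x = (\<Sum>k\<le>degree p. coeff p k * (y^k - x^k))"
    by (simp add: poly_altdef sum_subtractf[symmetric] algebra_simps)
  also have "\<dots> = (y - x) * (\<Sum>k\<le>degree p. coeff p k * (\<Sum>j<k. y^j * x^(k - Suc j)))"
    by (simp add: power_diff_sumr2 sum_distrib_left algebra_simps)
  finally show ?thesis using False by (simp add: diff_quot_def)
qed


definition mom :: "real measure \<Rightarrow> nat \<Rightarrow> real" where
  "mom M k = (\<integral>x. x^k \<partial>M)"

locale bmeas = prob_space M for M :: "real measure" + fixes S :: real
  assumes sets_M: "sets M = sets borel" and bnd: "AE x in M. \<bar>x\<bar> \<le> S" and S_nonneg: "0 \<le> S"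
begin

lemma meas_borel: "f \<in> borel_measurable borel \<Longrightarrow> f \<in> borel_measurable M"
  by (subst measurable_cong_sets[OF sets_M refl]) simp

lemma sets_borelI[measurable]: "A \<in> sets borel \<Longrightarrow> A \<in> sets M"
  using sets_M by simp

lemma int_bnd:
  fixes f :: "real \<Rightarrow> 'a::{banach,second_countable_topology}"
  assumes "f \<in> borel_measurable borel" "\<And>x. \<bar>x\<bar> \<le> S \<Longrightarrow> norm (f x) \<le> B"
  shows "integrable M f"
proof (rule integrable_const_bound[where B=B])
  show "AE x in M. norm (f x) \<le> B" using bnd by eventually_elim (use assms in auto)
  show "f \<in> borel_measurable M" using meas_borel[OF assms(1)] .
qed

lemma int_cont:
  fixes f :: "real \<Rightarrow> 'a::{banach,second_countable_topology}"
  assumes "continuous_on UNIV f"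
  shows "integrable M f"
proof -
  have "compact (f ` cball 0 S)"
    by (rule compact_continuous_image) (use assms continuous_on_subset in auto)
  then obtain B where B: "\<forall>y\<in>f ` cball 0 S. norm y \<le> B"
    using compact_imp_bounded bounded_iff by metis
  show ?thesis
    by (rule int_bnd[where B=B]) (use B assms borel_measurable_continuous_onI in auto)
qed

lemma int_poly: "integrable M (\<lambda>x. poly p x)"
  by (rule int_cont) (intro continuous_intros)

lemma int_pow: "integrable M (\<lambda>x. c * x^k)"
  by (rule int_cont) (intro continuous_intros)

lemma int_dq: "integrable M (\<lambda>x. diff_quot (poly p) y x)"
  unfolding dq_sum by (rule int_cont) (intro continuous_intros)

lemma Lop_sum:
  "Lop M (poly p) y = (\<Sum>k\<le>degree p. coeff p k * (\<Sum>j<k. y^j * mom M (k - Suc j)))"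
proof -
  have "Lop M (poly p) y = (\<Sum>k\<le>degree p. \<integral>x. coeff p k * (\<Sum>j<k. y^j * x^(k - Suc j)) \<partial>M)"
    unfolding Lop_def dq_sum
    by (subst Bochner_Integration.integral_sum) (auto intro!: int_cont continuous_intros)
  also have "\<dots> = (\<Sum>k\<le>degree p. coeff p k * (\<Sum>j<k. y^j * mom M (k - Suc j)))"
  proof (rule sum.cong[OF refl])
    fix k
    have "(\<integral>x. coeff p k * (\<Sum>j<k. y^j * x^(k - Suc j)) \<partial>M)
        = coeff p k * (\<integral>x. (\<Sum>j<k. y^j * x^(k - Suc j)) \<partial>M)" by simp
    also have "(\<integral>x. (\<Sum>j<k. y^j * x^(k - Suc j)) \<partial>M) = (\<Sum>j<k. \<integral>x. y^j * x^(k - Suc j) \<partial>M)"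
      by (rule Bochner_Integration.integral_sum) (rule int_pow)
    also have "\<dots> = (\<Sum>j<k. y^j * mom M (k - Suc j))"
      by (simp add: mom_def)
    finally show "(\<integral>x. coeff p k * (\<Sum>j<k. y^j * x^(k - Suc j)) \<partial>M)
        = coeff p k * (\<Sum>j<k. y^j * mom M (k - Suc j))" .
  qed
  finally show ?thesis .
qed

lemma Lop_ex: "\<exists>r. Lop M (poly p) = poly r"
proof
  let ?r = "\<Sum>k\<le>degree p. \<Sum>j<k. monom (coeff p k * mom M (k - Suc j)) j"
  show "Lop M (poly p) = poly ?r"
    by (rule ext) (simp add: Lop_sum poly_sum poly_monom sum_distrib_left algebra_simps)
qed

lemma Lop_pCons: "Lop M (poly (pCons a p)) y = y * Lop M (poly p) y + (\<integral>x. poly p x \<partial>M)"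
proof -
  have "(\<integral>x. y * diff_quot (poly p) y x + poly p x \<partial>M)
     = (\<integral>x. y * diff_quot (poly p) y x \<partial>M) + (\<integral>x. poly p x \<partial>M)"
    by (rule Bochner_Integration.integral_add) (auto intro!: int_dq int_poly)
  then show ?thesis unfolding Lop_def dq_pCons by simp
qed

lemma Lop_zero: "Lop M (poly 0) y = 0"
  unfolding Lop_def dq_zero by simp

lemma mom_bound: "\<bar>mom M k\<bar> \<le> S^k"
proof -
  have "\<bar>mom M k\<bar> \<le> (\<integral>x. \<bar>x^k\<bar> \<partial>M)"
    unfolding mom_def by (rule integral_abs_bound)
  also have "\<dots> \<le> (\<integral>x. S^k \<partial>M)"
    by (rule integral_mono_AE) (auto intro!: int_cont continuous_intros
        intro: AE_mp[OF bnd] simp: power_abs power_mono)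
  also have "\<dots> = S^k" by (simp add: prob_space)
  finally show ?thesis .
qed

lemma mom0: "mom M 0 = 1"
  by (simp add: mom_def prob_space)

end

lemma msupport_AE:
  fixes M :: "real measure"
  assumes sM: "sets M = sets borel" and sub: "msupport M \<subseteq> cball 0 R"
  shows "AE x in M. \<bar>x\<bar> \<le> R"
proof -
  define I where "I = {(q,r). q \<in> \<rat> \<and> r \<in> \<rat> \<and> emeasure M (ball q r) = 0}"
  define N where "N = (\<Union>i\<in>I. ball (fst i) (snd i))"
  have cI: "countable I"
    by (rule countable_subset[of _ "\<rat> \<times> \<rat>"]) (auto simp: I_def countable_rat)
  have "N \<in> null_sets M"
    unfolding N_def
  proof (rule null_sets_UN'[OF cI])
    fix i assume "i \<in> I"
    then show "ball (fst i) (snd i) \<in> null_sets M"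
      by (intro null_setsI) (auto simp: I_def sM)
  qed
  moreover have "{x \<in> space M. \<not> \<bar>x\<bar> \<le> R} \<subseteq> N"
  proof
    fix x assume "x \<in> {x \<in> space M. \<not> \<bar>x\<bar> \<le> R}"
    then have "x \<notin> msupport M" using sub by auto
    then obtain e where e: "e > 0" "\<not> emeasure M (ball x e) > 0"
      unfolding msupport_def by auto
    then have e0: "emeasure M (ball x e) = 0" by (simp add: zero_less_iff_neq_zero)
    obtain q where q: "q \<in> \<rat>" "x < q" "q < x + e/4"
      using Rats_dense_in_real[of x "x + e/4"] e by auto
    obtain r where r: "r \<in> \<rat>" "e/4 < r" "r < e/2"
      using Rats_dense_in_real[of "e/4" "e/2"] e by auto
    have sub2: "ball q r \<subseteq> ball x e"
      using q r by (auto simp: dist_real_def)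
    have "emeasure M (ball q r) \<le> emeasure M (ball x e)"
      by (rule emeasure_mono[OF sub2]) (simp add: sM)
    then have "emeasure M (ball q r) = 0" using e0 by simp
    then have "(q, r) \<in> I" using q r by (simp add: I_def)
    moreover have "x \<in> ball q r" using q r by (auto simp: dist_real_def)
    ultimately show "x \<in> N" unfolding N_def by force
  qed
  ultimately show ?thesis by (rule AE_I')
qed

context bmeas begin

lemma int_norm_le:
  fixes f :: "real \<Rightarrow> 'a::{banach,second_countable_topology}"
  assumes "integrable M f" "\<And>x. \<bar>x\<bar> \<le> S \<Longrightarrow> norm (f x) \<le> B"
  shows "norm (integral\<^sup>L M f) \<le> B"
proof -
  have "norm (integral\<^sup>L M f) \<le> (\<integral>x. norm (f x) \<partial>M)" by (rule integral_norm_bound)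
  also have "\<dots> \<le> (\<integral>x. B \<partial>M)"
    by (rule integral_mono_AE) (auto intro: AE_mp[OF bnd] assms)
  also have "\<dots> = B" by (simp add: prob_space)
  finally show ?thesis .
qed

end

locale phi0 = nu: bmeas \<nu> R + mu: prob_space \<mu> for \<nu> R and \<mu> :: "real measure" + fixes \<beta> \<gamma> :: real
  assumes sets_mu: "sets \<mu> = sets borel" and gpos: "\<gamma> > 0"
    and ident: "\<And>z. Im z \<noteq> 0 \<Longrightarrow> cauchy_transform \<mu> z
         = 1 / (z - complex_of_real \<beta> - complex_of_real \<gamma> * cauchy_transform \<nu> z)"
begin

lemma space_mu: "space \<mu> = UNIV"
  using sets_eq_imp_space_eq[OF sets_mu] by simp

lemma mu_meas: "f \<in> borel_measurable borel \<Longrightarrow> f \<in> borel_measurable \<mu>"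
  by (subst measurable_cong_sets[OF sets_mu refl]) simp

lemma Im_inv: "Im (1 / Complex a b) = - b / (a^2 + b^2)"
  by (simp add: Im_divide)

lemma cball_bound:
  assumes t: "\<bar>t\<bar> \<ge> R + \<bar>\<beta>\<bar> + \<gamma> + 2" and e: "\<epsilon> > 0"
  shows "measure \<mu> (cball t \<epsilon>) \<le> 2 * \<epsilon>^2 * (1 + \<gamma>)"
proof -
  define z where "z = Complex t \<epsilon>"
  have zx: "z - complex_of_real x = Complex (t - x) \<epsilon>" for x
    by (simp add: z_def complex_eq_iff)
  have znz: "z - complex_of_real x \<noteq> 0" for x
    using e by (simp add: zx complex_eq_iff)
  have contf: "continuous_on UNIV (\<lambda>x::real. 1 / (z - complex_of_real x))"
    by (intro continuous_intros) (use znz in auto)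
  have Imf: "Im (1 / (z - complex_of_real x)) = - (\<epsilon> / ((t - x)^2 + \<epsilon>^2))" for x
    by (simp add: zx Im_inv)
  define G where "G = cauchy_transform \<nu> z"
  have intf: "integrable \<nu> (\<lambda>x. 1 / (z - complex_of_real x))"
    by (rule nu.int_cont[OF contf])
  have R0: "0 \<le> R" by (rule nu.S_nonneg)
  have tx: "1 \<le> \<bar>t - x\<bar>" if "\<bar>x\<bar> \<le> R" for x
    using t that gpos by linarith
  have normG: "norm G \<le> 1"
    unfolding G_def cauchy_transform_def
  proof (rule nu.int_norm_le[OF intf])
    fix x :: real assume "\<bar>x\<bar> \<le> R"
    then have "1 \<le> \<bar>t - x\<bar>" by (rule tx)
    also have "\<bar>t - x\<bar> \<le> norm (z - complex_of_real x)"
      using abs_Re_le_cmod[of "z - complex_of_real x"] by (simp add: zx)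
    finally show "norm (1 / (z - complex_of_real x)) \<le> 1"
      by (simp add: norm_divide divide_le_eq_1)
  qed
  define J where "J = (\<integral>x. \<epsilon> / ((t - x)^2 + \<epsilon>^2) \<partial>\<nu>)"
  have ImG: "Im G = - J"
  proof -
    have "Im G = (\<integral>x. Im (1 / (z - complex_of_real x)) \<partial>\<nu>)"
      unfolding G_def cauchy_transform_def
      by (rule integral_bounded_linear[OF bounded_linear_Im intf, symmetric])
    then show ?thesis by (simp add: Imf J_def)
  qed
  have J0: "0 \<le> J" unfolding J_def using e by (intro integral_nonneg_AE) auto
  have intJ: "integrable \<nu> (\<lambda>x. \<epsilon> / ((t - x)^2 + \<epsilon>^2))"
    by (rule nu.int_cont) (intro continuous_intros, use e in \<open>auto simp: add_pos_nonneg\<close>)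
  have J1: "J \<le> \<epsilon>"
  proof -
    have "norm J \<le> \<epsilon>" unfolding J_def
    proof (rule nu.int_norm_le[OF intJ])
      fix x :: real assume "\<bar>x\<bar> \<le> R"
      then have "1 \<le> (t - x)^2" using tx[of x]
        by (metis abs_ge_self abs_le_square_iff abs_one power_one)
      then have "1 \<le> (t - x)^2 + \<epsilon>^2" by (simp add: add_increasing2)
      then have "\<epsilon> / ((t - x)^2 + \<epsilon>^2) \<le> \<epsilon> / 1"
        using e by (intro divide_left_mono) auto
      moreover have "0 \<le> \<epsilon> / ((t - x)^2 + \<epsilon>^2)" using e by simp
      ultimately show "norm (\<epsilon> / ((t - x)^2 + \<epsilon>^2)) \<le> \<epsilon>"
        by simp
    qed
    then show ?thesis by simp
  qed
  define D where "D = z - complex_of_real \<beta> - complex_of_real \<gamma> * G"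
  have ReD: "1 \<le> \<bar>Re D\<bar>"
  proof -
    have "\<bar>Re G\<bar> \<le> 1" using abs_Re_le_cmod[of G] normG by linarith
    then have "\<bar>\<gamma> * Re G\<bar> \<le> \<gamma>" using gpos by (simp add: abs_mult)
    moreover have "Re D = t - \<beta> - \<gamma> * Re G" by (simp add: D_def z_def)
    ultimately show ?thesis using t R0 by linarith
  qed
  have ImD: "Im D = \<epsilon> + \<gamma> * J" by (simp add: D_def z_def ImG)
  have ImD1: "0 < Im D" "Im D \<le> \<epsilon> * (1 + \<gamma>)"
    using ImD J0 J1 gpos e by (auto simp: algebra_simps intro: add_pos_nonneg mult_left_mono)
  define H where "H = cauchy_transform \<mu> z"
  have HD: "H = 1 / D" unfolding H_def D_def G_def by (rule ident) (use e in \<open>simp add: z_def\<close>)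
  have ImH: "\<bar>Im H\<bar> \<le> \<epsilon> * (1 + \<gamma>)"
  proof -
    have "Im H = - Im D / ((Re D)^2 + (Im D)^2)" by (simp add: HD Im_divide)
    moreover have N1: "1 \<le> (Re D)^2 + (Im D)^2"
    proof -
      have "1 \<le> (Re D)^2" using abs_le_square_iff[of 1 "Re D"] ReD by simp
      then show ?thesis by (simp add: add_increasing2)
    qed
    ultimately have "\<bar>Im H\<bar> = Im D / ((Re D)^2 + (Im D)^2)"
      using ImD1 by (simp add: abs_divide)
    also have "\<dots> \<le> Im D / 1"
      by (rule divide_left_mono) (use ImD1 N1 in auto)
    finally have "\<bar>Im H\<bar> \<le> Im D" by simp
    then show ?thesis using ImD1 by linarith
  qed
  define K where "K = (\<integral>x. \<epsilon> / ((t - x)^2 + \<epsilon>^2) \<partial>\<mu>)"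
  have bm: "(\<lambda>x. 1 / (z - complex_of_real x)) \<in> borel_measurable \<mu>"
    by (rule mu_meas, rule borel_measurable_continuous_onI[OF contf])
  have intmu: "integrable \<mu> (\<lambda>x. 1 / (z - complex_of_real x))"
  proof (rule mu.integrable_const_bound[where B="1/\<epsilon>"])
    show "AE x in \<mu>. norm (1 / (z - complex_of_real x)) \<le> 1 / \<epsilon>"
    proof (intro AE_I2)
      fix x
      have "\<epsilon> \<le> norm (z - complex_of_real x)"
        using abs_Im_le_cmod[of "z - complex_of_real x"] e by (simp add: zx)
      then show "norm (1 / (z - complex_of_real x)) \<le> 1 / \<epsilon>"
        using e by (simp add: norm_divide frac_le)
    qed
  qed (rule bm)
  have ImH2: "Im H = - K"
  proof -
    have "Im H = (\<integral>x. Im (1 / (z - complex_of_real x)) \<partial>\<mu>)"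
      unfolding H_def cauchy_transform_def
      by (rule integral_bounded_linear[OF bounded_linear_Im intmu, symmetric])
    then show ?thesis by (simp add: Imf K_def)
  qed
  have intK: "integrable \<mu> (\<lambda>x. \<epsilon> / ((t - x)^2 + \<epsilon>^2))"
    using integrable_bounded_linear[OF bounded_linear_Im intmu] by (simp add: Imf)
  have K1: "K \<le> \<epsilon> * (1 + \<gamma>)"
    using ImH ImH2 by linarith
  have "measure \<mu> (cball t \<epsilon>) = (\<integral>x. indicator (cball t \<epsilon>) x \<partial>\<mu>)"
    by (simp add: space_mu)
  also have "\<dots> \<le> (\<integral>x. 2 * \<epsilon> * (\<epsilon> / ((t - x)^2 + \<epsilon>^2)) \<partial>\<mu>)"
  proof (rule integral_mono)
    show "integrable \<mu> (indicat_real (cball t \<epsilon>))"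
      by (intro integrable_real_indicator) (simp_all add: sets_mu less_top[symmetric] mu.emeasure_finite)
    show "integrable \<mu> (\<lambda>x. 2 * \<epsilon> * (\<epsilon> / ((t - x)^2 + \<epsilon>^2)))"
      using integrable_mult_right[OF intK, of "2 * \<epsilon>"] by simp
    fix x
    show "indicat_real (cball t \<epsilon>) x \<le> 2 * \<epsilon> * (\<epsilon> / ((t - x)^2 + \<epsilon>^2))"
    proof (cases "x \<in> cball t \<epsilon>")
      case True
      then have "\<bar>t - x\<bar> \<le> \<epsilon>" by (simp add: dist_real_def)
      then have "(t - x)^2 \<le> \<epsilon>^2" using power_mono[OF _ abs_ge_zero, of "t - x" \<epsilon> 2] by simp
      then have "(t - x)^2 + \<epsilon>^2 \<le> 2 * \<epsilon> * \<epsilon>" by (simp add: power2_eq_square)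
      moreover have pos: "0 < (t - x)^2 + \<epsilon>^2" using e by (simp add: add_nonneg_pos)
      ultimately have "1 \<le> (2 * \<epsilon> * \<epsilon>) / ((t - x)^2 + \<epsilon>^2)"
        by (subst le_divide_eq_1_pos) auto
      then show ?thesis using True by simp
    next
      case False
      then show ?thesis using e by (simp add: add_pos_nonneg)
    qed
  qed
  also have "\<dots> = 2 * \<epsilon> * K" unfolding K_def by (rule integral_mult_right_zero)
  also have "\<dots> \<le> 2 * \<epsilon> * (\<epsilon> * (1 + \<gamma>))" using K1 e by simp
  finally show ?thesis by (simp add: power2_eq_square algebra_simps)
qed


lemma small_imp_zero:
  fixes m K :: real
  assumes "0 \<le> m" "\<And>N. (N::nat) \<ge> 1 \<Longrightarrow> m \<le> K / real N"
  shows "m = 0"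
proof (rule ccontr)
  assume "m \<noteq> 0"
  then have m0: "m > 0" using assms(1) by simp
  obtain n :: nat where n: "K / m < real n" using reals_Archimedean2 by blast
  define N where "N = Suc n"
  have N1: "N \<ge> 1" by (simp add: N_def)
  have "K / m < real N" using n by (simp add: N_def)
  then have "K < real N * m" using m0 by (simp add: divide_less_eq)
  then have "K / real N < m" using N1 by (simp add: divide_less_eq mult.commute)
  with assms(2)[of N] N1 show False by simp
qed

lemma interval_null:
  defines "T0 \<equiv> R + \<bar>\<beta>\<bar> + \<gamma> + 2"
  assumes ab: "a < b" and far: "T0 \<le> a \<or> b \<le> - T0"
  shows "measure \<mu> {a<..b} = 0"
proof (rule small_imp_zero)
  show "0 \<le> measure \<mu> {a<..b}" by simp
  fix N :: nat assume N1: "N \<ge> 1"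
  define h where "h = (b - a) / N"
  have h0: "h > 0" using ab N1 by (simp add: h_def)
  define F where "F s = measure \<mu> {..s}" for s
  have Fdiff: "F s' - F s = measure \<mu> {s<..s'}" if "s \<le> s'" for s s'
  proof -
    have "{s<..s'} = {..s'} - {..s}" by auto
    then have "measure \<mu> {s<..s'} = measure \<mu> {..s'} - measure \<mu> {..s}"
      using that by (simp add: mu.finite_measure_Diff sets_mu)
    then show ?thesis by (simp add: F_def)
  qed
  define f where "f i = F (a + real i * h)" for i
  have bN: "a + real N * h = b" using N1 by (simp add: h_def)
  have "measure \<mu> {a<..b} = F b - F a" using Fdiff ab by simp
  also have "\<dots> = (\<Sum>i<N. f (Suc i) - f i)"
    by (subst sum_lessThan_telescope) (simp add: f_def bN)
  also have "\<dots> \<le> (\<Sum>i<N. 2 * (h/2)^2 * (1 + \<gamma>))"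
  proof (rule sum_mono)
    fix i assume i: "i \<in> {..<N}"
    define c where "c = a + (real i + 1/2) * h"
    have "f (Suc i) - f i = measure \<mu> {a + real i * h<..a + real (Suc i) * h}"
      unfolding f_def using h0 by (intro Fdiff) (simp add: algebra_simps)
    also have "\<dots> \<le> measure \<mu> (cball c (h/2))"
    proof (rule mu.finite_measure_mono)
      show "{a + real i * h<..a + real (Suc i) * h} \<subseteq> cball c (h / 2)"
      proof
        fix x assume "x \<in> {a + real i * h<..a + real (Suc i) * h}"
        then have "a + real i * h < x" "x \<le> a + real i * h + h" by (auto simp: algebra_simps)
        then have "c - x \<le> h / 2" "- (c - x) \<le> h / 2" unfolding c_def by (simp_all add: field_simps)
        then have "\<bar>c - x\<bar> \<le> h / 2" by (rule abs_leI)
        then show "x \<in> cball c (h / 2)" by (simp add: dist_real_def)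
      qed
    qed (simp add: sets_mu)
    also have "\<dots> \<le> 2 * (h/2)^2 * (1 + \<gamma>)"
    proof (rule cball_bound)
      have "a < c" using h0 by (simp add: c_def)
      moreover have "c < b"
      proof -
        have "(real i + 1/2) * h < real N * h" using i h0 by (intro mult_strict_right_mono) auto
        then show ?thesis using bN by (simp add: c_def)
      qed
      ultimately show "R + \<bar>\<beta>\<bar> + \<gamma> + 2 \<le> \<bar>c\<bar>"
        using far unfolding T0_def by linarith
      show "0 < h/2" using h0 by simp
    qed
    finally show "f (Suc i) - f i \<le> 2 * (h/2)^2 * (1 + \<gamma>)" .
  qed
  also have "\<dots> = ((b - a)^2 * (1 + \<gamma>) / 2) / N"
    using N1 by (simp add: h_def power2_eq_square field_simps)
  finally show "measure \<mu> {a<..b} \<le> ((b - a)^2 * (1 + \<gamma>) / 2) / real N" .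
qed

lemma mu_AE_bound: "AE x in \<mu>. \<bar>x\<bar> \<le> R + \<bar>\<beta>\<bar> + \<gamma> + 2"
proof -
  define T0 where "T0 = R + \<bar>\<beta>\<bar> + \<gamma> + 2"
  have T0: "T0 \<ge> 0" using nu.S_nonneg gpos by (simp add: T0_def)
  define N where "N = (\<Union>n::nat. {T0<..T0 + real n + 1} \<union> {- T0 - real n - 1<..- T0})"
  have nul: "A \<in> null_sets \<mu>" if "A = {a<..b}" "a < b" "T0 \<le> a \<or> b \<le> - T0" for A a b
  proof (rule null_setsI)
    have "measure \<mu> A = 0" using interval_null[of a b] that by (simp add: T0_def)
    then show "emeasure \<mu> A = 0" by (simp add: mu.emeasure_eq_measure)
    show "A \<in> sets \<mu>" using that by (simp add: sets_mu)
  qed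
  have "N \<in> null_sets \<mu>"
    unfolding N_def
    by (intro null_sets_UN null_sets.Un nul[OF refl]) (use T0 in auto)
  moreover have "{x \<in> space \<mu>. \<not> \<bar>x\<bar> \<le> T0} \<subseteq> N"
  proof
    fix x assume "x \<in> {x \<in> space \<mu>. \<not> \<bar>x\<bar> \<le> T0}"
    then have x: "\<bar>x\<bar> > T0" by simp
    obtain n :: nat where n: "\<bar>x\<bar> < real n" using reals_Archimedean2 by blast
    show "x \<in> N"
    proof (cases "x > 0")
      case True
      then have "x \<in> {T0<..T0 + real n + 1}" using x n T0 by auto
      then show ?thesis unfolding N_def by blast
    next
      case False
      then have "x \<in> {- T0 - real n - 1<..- T0}" using x n T0 by auto
      then show ?thesis unfolding N_def by blast
    qed
  qed
  ultimately show ?thesis unfolding T0_def by (rule AE_I')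
qed

end

context bmeas begin

lemma meas_inv: "(\<lambda>x. 1 / (1 - w * complex_of_real x)) \<in> borel_measurable borel"
  by measurable

lemma geo_bound:
  fixes w :: complex
  assumes q1: "norm w * S < 1"
  shows "norm ((\<integral>x. 1 / (1 - w * complex_of_real x) \<partial>M) - (\<Sum>k<n. complex_of_real (mom M k) * w^k))
         \<le> (norm w * S)^n / (1 - norm w * S)"
proof -
  define q where "q = norm w * S"
  have q0: "0 \<le> q" using S_nonneg by (simp add: q_def)
  have q1': "q < 1" using q1 by (simp add: q_def)
  have nwx: "norm (w * complex_of_real x) \<le> q" if "\<bar>x\<bar> \<le> S" for x
    using that by (simp add: q_def norm_mult mult_left_mono)
  have den: "1 - q \<le> norm (1 - w * complex_of_real x)" if "\<bar>x\<bar> \<le> S" for x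
    using norm_triangle_ineq2[of 1 "w * complex_of_real x"] nwx[OF that] by simp
  have intf: "integrable M (\<lambda>x. 1 / (1 - w * complex_of_real x))"
  proof (rule int_bnd[OF meas_inv])
    fix x :: real assume x: "\<bar>x\<bar> \<le> S"
    have "1 / norm (1 - w * complex_of_real x) \<le> 1 / (1 - q)"
      using den[OF x] q1' by (intro divide_left_mono) (auto intro!: mult_pos_pos)
    then show "norm (1 / (1 - w * complex_of_real x)) \<le> 1 / (1 - q)"
      by (simp add: norm_divide)
  qed
  have ints: "integrable M (\<lambda>x. \<Sum>k<n. (w * complex_of_real x)^k)"
    by (rule int_cont) (intro continuous_intros)
  have psum: "(\<Sum>k<n. complex_of_real (mom M k) * w^k) = (\<integral>x. (\<Sum>k<n. (w * complex_of_real x)^k) \<partial>M)"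
  proof -
    have "(\<integral>x. (\<Sum>k<n. (w * complex_of_real x)^k) \<partial>M) = (\<Sum>k<n. \<integral>x. (w * complex_of_real x)^k \<partial>M)"
      by (rule Bochner_Integration.integral_sum) (rule int_cont, intro continuous_intros)
    also have "\<dots> = (\<Sum>k<n. complex_of_real (mom M k) * w^k)"
    proof (rule sum.cong[OF refl])
      fix k
      have "(\<integral>x. (w * complex_of_real x)^k \<partial>M) = (\<integral>x. w^k * complex_of_real (x^k) \<partial>M)"
        by (simp add: power_mult_distrib)
      also have "\<dots> = w^k * (\<integral>x. complex_of_real (x^k) \<partial>M)"
        by (rule integral_mult_right_zero)
      also have "\<dots> = w^k * complex_of_real (mom M k)"
        by (simp only: integral_complex_of_real mom_def)
      finally show "(\<integral>x. (w * complex_of_real x)^k \<partial>M) = complex_of_real (mom M k) * w^k"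
        by simp
    qed
    finally show ?thesis by simp
  qed
  have "(\<integral>x. 1 / (1 - w * complex_of_real x) \<partial>M) - (\<Sum>k<n. complex_of_real (mom M k) * w^k)
      = (\<integral>x. 1 / (1 - w * complex_of_real x) - (\<Sum>k<n. (w * complex_of_real x)^k) \<partial>M)"
    unfolding psum by (rule Bochner_Integration.integral_diff[OF intf ints, symmetric])
  also have "norm \<dots> \<le> q^n / (1 - q)"
  proof (rule int_norm_le)
    show "integrable M (\<lambda>x. 1 / (1 - w * complex_of_real x) - (\<Sum>k<n. (w * complex_of_real x)^k))"
      using intf ints by simp
    fix x :: real assume x: "\<bar>x\<bar> \<le> S"
    define u where "u = w * complex_of_real x"
    have u1: "u \<noteq> 1" using nwx[OF x] q1' by (auto simp: u_def)
    have "1 / (1 - u) - (\<Sum>k<n. u^k) = u^n / (1 - u)"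
      using u1 by (simp add: sum_gp_strict field_simps)
    moreover have "norm (u^n / (1 - u)) \<le> q^n / (1 - q)"
    proof -
      have "norm (u^n) \<le> q^n" unfolding norm_power u_def
        by (rule power_mono[OF nwx[OF x]]) simp
      moreover have "1 - q \<le> norm (1 - u)" using den[OF x] by (simp add: u_def)
      ultimately show ?thesis unfolding norm_divide
        using q1' q0 by (intro frac_le) auto
    qed
    ultimately show "norm (1 / (1 - w * complex_of_real x) - (\<Sum>k<n. (w * complex_of_real x)^k)) \<le> q^n / (1 - q)"
      by (simp add: u_def)
  qed
  finally show ?thesis by (simp add: q_def)
qed

lemma expand:
  fixes w :: complex
  assumes q1: "norm w * S < 1"
  shows "(\<lambda>k. complex_of_real (mom M k) * w^k) sums (\<integral>x. 1 / (1 - w * complex_of_real x) \<partial>M)"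
proof -
  define s where "s = (\<integral>x. 1 / (1 - w * complex_of_real x) \<partial>M)"
  define P where "P n = (\<Sum>k<n. complex_of_real (mom M k) * w^k)" for n
  define q where "q = norm w * S"
  have q0: "0 \<le> q" using S_nonneg by (simp add: q_def)
  have "(\<lambda>n. s - P n) \<longlonglongrightarrow> 0"
  proof (rule Lim_null_comparison)
    show "\<forall>\<^sub>F n in sequentially. norm (s - P n) \<le> q^n / (1 - q)"
      using geo_bound[OF q1] by (simp add: s_def P_def q_def)
    show "(\<lambda>n. q^n / (1 - q)) \<longlonglongrightarrow> 0"
      using q0 q1 by (intro tendsto_divide_zero LIMSEQ_power_zero) (auto simp: q_def)
  qed
  then have "(\<lambda>n. s - (s - P n)) \<longlonglongrightarrow> s - 0" by (intro tendsto_diff tendsto_const)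
  then show ?thesis unfolding sums_def s_def P_def by simp
qed

lemma abs_summable:
  fixes w :: complex
  assumes q1: "norm w * S < 1"
  shows "summable (\<lambda>k. norm (complex_of_real (mom M k) * w^k))"
proof (rule summable_comparison_test)
  show "\<exists>N. \<forall>n\<ge>N. norm (norm (complex_of_real (mom M n) * w^n)) \<le> (norm w * S)^n"
  proof (intro exI allI impI)
    fix n :: nat
    have "\<bar>mom M n\<bar> * norm w ^ n \<le> S^n * norm w ^ n"
      by (rule mult_right_mono[OF mom_bound]) simp
    then show "norm (norm (complex_of_real (mom M n) * w^n)) \<le> (norm w * S)^n"
      by (simp add: norm_mult norm_power power_mult_distrib mult.commute)
  qed
  show "summable (\<lambda>n. (norm w * S)^n)"
    using q1 S_nonneg by (intro summable_geometric) simp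
qed

end

locale phi1 = nu: bmeas \<nu> S + mu: bmeas \<mu> S for \<nu> \<mu> :: "real measure" and S :: real +
  fixes \<beta> \<gamma> :: real
  assumes gpos: "\<gamma> > 0"
    and ident: "\<And>z. Im z \<noteq> 0 \<Longrightarrow> cauchy_transform \<mu> z
         = 1 / (z - complex_of_real \<beta> - complex_of_real \<gamma> * cauchy_transform \<nu> z)"
begin

definition cc :: "nat \<Rightarrow> real" where
  "cc k = (\<Sum>j<k. mom \<nu> j * mom \<mu> (k - Suc j))"

definition Lam :: "nat \<Rightarrow> real" where
  "Lam k = mom \<mu> (Suc k) - \<beta> * mom \<mu> k - \<gamma> * cc k"

lemma lam_sums:
  fixes w :: complex
  assumes w0: "w \<noteq> 0" and imw: "Im w \<noteq> 0" and small: "norm w * (2 * S + 2) < 1"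
  shows "(\<lambda>k. complex_of_real (Lam k) * w^k) sums 0"
proof -
  define A where "A = (\<integral>x. 1 / (1 - w * complex_of_real x) \<partial>\<mu>)"
  define B where "B = (\<integral>x. 1 / (1 - w * complex_of_real x) \<partial>\<nu>)"
  have S0: "0 \<le> S" by (rule mu.S_nonneg)
  have q2: "norm w * S < 1/2"
  proof -
    have "norm w * (2 * S) \<le> norm w * (2 * S + 2)" by (intro mult_left_mono) auto
    then show ?thesis using small by simp
  qed
  have q1: "norm w * S < 1" using q2 by simp
  have hA: "(\<lambda>k. complex_of_real (mom \<mu> k) * w^k) sums A" unfolding A_def by (rule mu.expand[OF q1])
  have hB: "(\<lambda>k. complex_of_real (mom \<nu> k) * w^k) sums B" unfolding B_def by (rule nu.expand[OF q1])
  have A0: "A \<noteq> 0"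
  proof
    assume "A = 0"
    have "norm (A - (\<Sum>k<1. complex_of_real (mom \<mu> k) * w^k)) \<le> (norm w * S)^1 / (1 - norm w * S)"
      unfolding A_def by (rule mu.geo_bound[OF q1])
    then have "1 \<le> (norm w * S) / (1 - norm w * S)" using \<open>A = 0\<close> by (simp add: mu.mom0)
    then have "1 - norm w * S \<le> norm w * S" using q1 by (simp add: le_divide_eq)
    then show False using q2 by (simp add: algebra_simps)
  qed
  have ctmu: "cauchy_transform \<mu> (1 / w) = w * A"
  proof -
    have "cauchy_transform \<mu> (1 / w) = (\<integral>x. w * (1 / (1 - w * complex_of_real x)) \<partial>\<mu>)"
      unfolding cauchy_transform_def
    proof (rule Bochner_Integration.integral_cong[OF refl])
      fix x
      show "1 / (1 / w - complex_of_real x) = w * (1 / (1 - w * complex_of_real x))"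
      proof (cases "1 - w * complex_of_real x = 0")
        case True
        then have "1 / w - complex_of_real x = 0" using w0 by (simp add: field_simps)
        then show ?thesis using True by simp
      next
        case False
        then show ?thesis using w0 by (simp add: field_simps)
      qed
    qed
    then show ?thesis unfolding A_def by (simp only: integral_mult_right_zero)
  qed
  have ctnu: "cauchy_transform \<nu> (1 / w) = w * B"
  proof -
    have "cauchy_transform \<nu> (1 / w) = (\<integral>x. w * (1 / (1 - w * complex_of_real x)) \<partial>\<nu>)"
      unfolding cauchy_transform_def
    proof (rule Bochner_Integration.integral_cong[OF refl])
      fix x
      show "1 / (1 / w - complex_of_real x) = w * (1 / (1 - w * complex_of_real x))"
      proof (cases "1 - w * complex_of_real x = 0")
        case True
        then have "1 / w - complex_of_real x = 0" using w0 by (simp add: field_simps)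
        then show ?thesis using True by simp
      next
        case False
        then show ?thesis using w0 by (simp add: field_simps)
      qed
    qed
    then show ?thesis unfolding B_def by (simp only: integral_mult_right_zero)
  qed
  have im1w: "Im (1 / w) \<noteq> 0"
  proof
    assume "Im (1 / w) = 0"
    then have "1 / w \<in> \<real>" by (simp add: complex_is_Real_iff)
    then have "1 / (1 / w) \<in> \<real>" by (rule Reals_divide[OF Reals_1])
    then show False using imw by (simp add: complex_is_Real_iff)
  qed
  define D where "D = 1 / w - complex_of_real \<beta> - complex_of_real \<gamma> * (w * B)"
  have wAD: "w * A = 1 / D" using ident[OF im1w] unfolding ctmu ctnu D_def .
  have D0: "D \<noteq> 0" using wAD w0 A0 by auto
  have key: "A * (1 - complex_of_real \<beta> * w - complex_of_real \<gamma> * w^2 * B) = 1"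
  proof -
    have "w * A * D = 1" using wAD D0 by simp
    then have "A * (w * D) = 1" by (simp add: ac_simps)
    moreover have "w * D = 1 - complex_of_real \<beta> * w - complex_of_real \<gamma> * w^2 * B"
      using w0 by (simp add: D_def field_simps power2_eq_square)
    ultimately show ?thesis by simp
  qed
  have s1: "(\<lambda>k. complex_of_real (mom \<mu> (Suc k)) * w^k) sums ((A - 1) / w)"
  proof -
    have "(\<lambda>k. complex_of_real (mom \<mu> (Suc k)) * w^(Suc k)) sums (A - 1)"
      using hA by (subst sums_Suc_iff) (simp add: mu.mom0)
    from sums_divide[OF this, of w] show ?thesis using w0 by simp
  qed
  have s2: "(\<lambda>k. complex_of_real (\<beta> * mom \<mu> k) * w^k) sums (complex_of_real \<beta> * A)"
    using sums_mult[OF hA, of "complex_of_real \<beta>"] by (simp add: algebra_simps)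
  have s3: "(\<lambda>k. complex_of_real (cc k) * w^k) sums (w * B * A)"
  proof -
    have "(\<lambda>k. \<Sum>i\<le>k. (complex_of_real (mom \<nu> i) * w^i) * (complex_of_real (mom \<mu> (k - i)) * w^(k - i)))
        sums ((\<Sum>k. complex_of_real (mom \<nu> k) * w^k) * (\<Sum>k. complex_of_real (mom \<mu> k) * w^k))"
      by (rule Cauchy_product_sums) (rule nu.abs_summable[OF q1], rule mu.abs_summable[OF q1])
    moreover have "(\<Sum>i\<le>k. (complex_of_real (mom \<nu> i) * w^i) * (complex_of_real (mom \<mu> (k - i)) * w^(k - i)))
        = complex_of_real (cc (Suc k)) * w^k" for k
    proof -
      have "(\<Sum>i\<le>k. (complex_of_real (mom \<nu> i) * w^i) * (complex_of_real (mom \<mu> (k - i)) * w^(k - i)))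
          = (\<Sum>i\<le>k. complex_of_real (mom \<nu> i * mom \<mu> (k - i)) * w^k)"
      proof (rule sum.cong[OF refl])
        fix i assume "i \<in> {..k}"
        then have "w^i * w^(k - i) = w^k" by (simp add: power_add[symmetric])
        then show "(complex_of_real (mom \<nu> i) * w^i) * (complex_of_real (mom \<mu> (k - i)) * w^(k - i))
            = complex_of_real (mom \<nu> i * mom \<mu> (k - i)) * w^k"
          by (simp add: algebra_simps)
      qed
      also have "\<dots> = complex_of_real (\<Sum>i\<le>k. mom \<nu> i * mom \<mu> (k - i)) * w^k"
        by (simp add: sum_distrib_right)
      also have "(\<Sum>i\<le>k. mom \<nu> i * mom \<mu> (k - i)) = cc (Suc k)"
        unfolding cc_def lessThan_Suc_atMost by simp
      finally show ?thesis .
    qed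
    ultimately have "(\<lambda>k. complex_of_real (cc (Suc k)) * w^k) sums (B * A)"
      using sums_unique[OF hA] sums_unique[OF hB] by simp
    from sums_mult[OF this, of w]
    have "(\<lambda>k. complex_of_real (cc (Suc k)) * w^(Suc k)) sums (w * B * A)"
      by (simp add: algebra_simps)
    then show ?thesis by (subst (asm) sums_Suc_iff) (simp add: cc_def)
  qed
  have "(\<lambda>k. complex_of_real (mom \<mu> (Suc k)) * w^k - complex_of_real (\<beta> * mom \<mu> k) * w^k
          - complex_of_real \<gamma> * (complex_of_real (cc k) * w^k))
        sums ((A - 1) / w - complex_of_real \<beta> * A - complex_of_real \<gamma> * (w * B * A))"
    by (intro sums_diff sums_mult s1 s2 s3)
  moreover have "(A - 1) / w - complex_of_real \<beta> * A - complex_of_real \<gamma> * (w * B * A) = 0"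
  proof -
    have "(A - 1) / w - complex_of_real \<beta> * A - complex_of_real \<gamma> * (w * B * A)
        = (A * (1 - complex_of_real \<beta> * w - complex_of_real \<gamma> * w^2 * B) - 1) / w"
      using w0 by (simp add: field_simps power2_eq_square)
    then show ?thesis using key by simp
  qed
  ultimately show ?thesis by (simp add: Lam_def algebra_simps)
qed


lemma Lam_zero: "Lam k = 0"
proof (induction k rule: less_induct)
  case (less k)
  define \<delta> where "\<delta> = 1 / (2 * S + 2)"
  have S0: "0 \<le> S" by (rule mu.S_nonneg)
  have d0: "\<delta> > 0" using S0 by (simp add: \<delta>_def add_nonneg_pos)
  have ok: "(\<lambda>i. complex_of_real (Lam (i + k)) * (\<i> * complex_of_real s)^i) sums 0"
    if s: "0 < s" "s < \<delta>" for s
  proof -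
    define w where "w = \<i> * complex_of_real s"
    have nw: "norm w = s" using s by (simp add: w_def norm_mult)
    have w0: "w \<noteq> 0" using s by (simp add: w_def)
    have imw: "Im w \<noteq> 0" using s by (simp add: w_def)
    have small: "norm w * (2 * S + 2) < 1"
      using s S0 unfolding nw \<delta>_def by (simp add: less_divide_eq add_nonneg_pos)
    have "(\<lambda>i. complex_of_real (Lam i) * w^i) sums 0" by (rule lam_sums[OF w0 imw small])
    then have "(\<lambda>i. complex_of_real (Lam (i + k)) * w^(i + k)) sums 0"
      by (subst sums_zero_iff_shift) (use less.IH in auto)
    then have "(\<lambda>i. complex_of_real (Lam (i + k)) * w^(i + k) / w^k) sums (0 / w^k)"
      by (rule sums_divide)
    then show ?thesis using w0 by (simp add: power_add w_def)
  qed
  define P where "P u = (\<Sum>i. complex_of_real (Lam (i + k)) * u^i)" for u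
  have cont: "isCont P 0"
    unfolding P_def
  proof (rule isCont_powser)
    show "summable (\<lambda>i. complex_of_real (Lam (i + k)) * (\<i> * complex_of_real (\<delta>/2))^i)"
      using ok[of "\<delta>/2"] d0 by (auto simp: sums_iff)
    show "norm (0::complex) < norm (\<i> * complex_of_real (\<delta>/2))"
      using d0 by (simp add: norm_mult)
  qed
  define s where "s n = (\<delta>/2) / real (Suc n)" for n
  have s0: "0 < s n" "s n < \<delta>" for n
  proof -
    show "0 < s n" using d0 by (simp add: s_def)
    have "(\<delta>/2) / real (Suc n) \<le> (\<delta>/2) / 1" using d0 by (intro divide_left_mono) auto
    then have "s n \<le> \<delta>/2" unfolding s_def by simp
    then show "s n < \<delta>" using d0 by linarith
  qed
  have "(\<lambda>n. \<i> * complex_of_real (s n)) \<longlonglongrightarrow> \<i> * complex_of_real 0"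
  proof (intro tendsto_mult tendsto_const tendsto_of_real)
    show "s \<longlonglongrightarrow> 0" unfolding s_def
      using LIMSEQ_Suc[OF lim_const_over_n[of "\<delta>/2"]] by simp
  qed
  then have L: "(\<lambda>n. \<i> * complex_of_real (s n)) \<longlonglongrightarrow> 0" by simp
  have "(\<lambda>n. P (\<i> * complex_of_real (s n))) \<longlonglongrightarrow> P 0"
    by (rule isCont_tendsto_compose[OF cont L])
  moreover have "P (\<i> * complex_of_real (s n)) = 0" for n
    unfolding P_def using ok[OF s0] by (simp add: sums_iff)
  ultimately have "(\<lambda>n. 0) \<longlonglongrightarrow> P 0" by simp
  then have "P 0 = 0" using LIMSEQ_unique tendsto_const by blast
  moreover have "P 0 = complex_of_real (Lam k)"
    unfolding P_def using powser_zero[of "\<lambda>i. complex_of_real (Lam (i + k))"] by simp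
  ultimately show ?case by simp
qed

lemma mom_rec: "mom \<mu> (Suc k) = \<beta> * mom \<mu> k + \<gamma> * (\<Sum>j<k. mom \<nu> j * mom \<mu> (k - Suc j))"
  using Lam_zero[of k] by (simp add: Lam_def cc_def)

end

context bmeas begin

lemma int_polysum: "(\<integral>x. (\<Sum>k\<in>I. c k * x^(e k)) \<partial>M) = (\<Sum>k\<in>I. c k * mom M (e k))"
proof -
  have "(\<integral>x. (\<Sum>k\<in>I. c k * x^(e k)) \<partial>M) = (\<Sum>k\<in>I. \<integral>x. c k * x^(e k) \<partial>M)"
    by (rule Bochner_Integration.integral_sum) (rule int_pow)
  then show ?thesis by (simp add: mom_def)
qed

lemma int_poly_mom: "(\<integral>x. poly g x \<partial>M) = (\<Sum>k\<le>degree g. coeff g k * mom M k)"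
  unfolding poly_altdef by (rule int_polysum)

lemma int_xpoly_mom: "(\<integral>x. x * poly g x \<partial>M) = (\<Sum>k\<le>degree g. coeff g k * mom M (Suc k))"
proof -
  have "(\<lambda>x. x * poly g x) = (\<lambda>x. \<Sum>k\<le>degree g. coeff g k * x^(Suc k))"
    by (rule ext) (simp add: poly_altdef sum_distrib_left algebra_simps)
  then show ?thesis by (simp only: int_polysum)
qed

end

context phi1 begin

lemma int_Lop: "(\<integral>y. Lop \<mu> (poly g) y \<partial>\<nu>)
   = (\<Sum>k\<le>degree g. coeff g k * (\<Sum>j<k. mom \<nu> j * mom \<mu> (k - Suc j)))"
proof -
  have "(\<integral>y. Lop \<mu> (poly g) y \<partial>\<nu>)
      = (\<integral>y. (\<Sum>k\<le>degree g. \<Sum>j<k. (coeff g k * mom \<mu> (k - Suc j)) * y^j) \<partial>\<nu>)"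
    by (simp add: mu.Lop_sum sum_distrib_left algebra_simps)
  also have "\<dots> = (\<Sum>k\<le>degree g. \<integral>y. (\<Sum>j<k. (coeff g k * mom \<mu> (k - Suc j)) * y^j) \<partial>\<nu>)"
    by (rule Bochner_Integration.integral_sum) (rule nu.int_cont, intro continuous_intros)
  also have "\<dots> = (\<Sum>k\<le>degree g. coeff g k * (\<Sum>j<k. mom \<nu> j * mom \<mu> (k - Suc j)))"
    by (simp only: nu.int_polysum) (simp add: sum_distrib_left algebra_simps)
  finally show ?thesis .
qed

lemma star: "(\<integral>x. x * poly g x \<partial>\<mu>) = \<beta> * (\<integral>x. poly g x \<partial>\<mu>) + \<gamma> * (\<integral>y. Lop \<mu> (poly g) y \<partial>\<nu>)"
  unfolding mu.int_xpoly_mom mu.int_poly_mom int_Lop mom_rec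
  by (simp add: sum_distrib_left sum.distrib algebra_simps)

lemma Lop_fun_zero: "Lop M (\<lambda>_. 0) y = 0"
proof -
  have d: "deriv (\<lambda>_::real. 0::real) y = 0" by (rule DERIV_imp_deriv) (rule DERIV_const)
  have "diff_quot (\<lambda>_. 0) y = (\<lambda>x. 0)" by (rule ext) (simp add: diff_quot_def d)
  then show ?thesis unfolding Lop_def by simp
qed

lemma T_ident:
  "\<gamma> * Lop \<nu> (Lop \<mu> (poly f)) x - (x - \<beta>) * Lop \<mu> (poly f) x = - poly f x + (\<integral>y. poly f y \<partial>\<mu>)"
proof (induction f arbitrary: x rule: pCons_induct)
  case 0
  have "Lop \<mu> (poly 0) = (\<lambda>_. 0)" by (rule ext) (rule mu.Lop_zero)
  then show ?case by (simp add: Lop_fun_zero)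
next
  case (pCons a g)
  obtain r where r: "Lop \<mu> (poly g) = poly r" using mu.Lop_ex by blast
  define c where "c = (\<integral>y. poly g y \<partial>\<mu>)"
  have L1: "Lop \<mu> (poly (pCons a g)) = poly (pCons c r)"
    by (rule ext) (simp add: mu.Lop_pCons r c_def)
  have L2: "Lop \<nu> (Lop \<mu> (poly (pCons a g))) x
      = x * Lop \<nu> (Lop \<mu> (poly g)) x + (\<integral>y. Lop \<mu> (poly g) y \<partial>\<nu>)"
    unfolding L1 r by (rule nu.Lop_pCons)
  have L3: "Lop \<mu> (poly (pCons a g)) x = x * Lop \<mu> (poly g) x + c"
    by (simp add: mu.Lop_pCons c_def)
  have I: "(\<integral>y. poly (pCons a g) y \<partial>\<mu>) = a + (\<integral>y. y * poly g y \<partial>\<mu>)"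
  proof -
    have "(\<integral>y. a + y * poly g y \<partial>\<mu>) = (\<integral>y. a \<partial>\<mu>) + (\<integral>y. y * poly g y \<partial>\<mu>)"
      by (rule Bochner_Integration.integral_add) (auto intro!: mu.int_cont continuous_intros)
    then show ?thesis by (simp add: mu.prob_space)
  qed
  have IH: "\<gamma> * Lop \<nu> (Lop \<mu> (poly g)) x - (x - \<beta>) * Lop \<mu> (poly g) x = - poly g x + c"
    using pCons.IH[of x] by (simp add: c_def)
  then have IHx: "x * (\<gamma> * Lop \<nu> (Lop \<mu> (poly g)) x - (x - \<beta>) * Lop \<mu> (poly g) x) = x * (- poly g x + c)"
    by simp
  have st: "(\<integral>y. y * poly g y \<partial>\<mu>) = \<beta> * c + \<gamma> * (\<integral>y. Lop \<mu> (poly g) y \<partial>\<nu>)"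
    unfolding c_def by (rule star)
  show ?case
    unfolding L2 L3 I using IHx st by (simp add: algebra_simps)
qed

end

context phi1 begin

lemma space_nu: "space \<nu> = UNIV"
  using sets_eq_imp_space_eq[OF nu.sets_M] by simp

lemma pos_def:
  assumes inf: "infinite (msupport \<nu>)" and p: "p \<noteq> 0"
  shows "(\<integral>x. poly p x * poly p x \<partial>\<mu>) > 0"
proof (rule ccontr)
  assume "\<not> ?thesis"
  moreover have "0 \<le> (\<integral>x. poly p x * poly p x \<partial>\<mu>)" by (rule integral_nonneg_AE) simp
  ultimately have z: "(\<integral>x. poly p x * poly p x \<partial>\<mu>) = 0" by simp
  have "AE x in \<mu>. poly p x * poly p x = 0"
    using z by (subst (asm) integral_nonneg_eq_0_iff_AE) (auto intro!: mu.int_cont continuous_intros)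
  then have AEp: "AE x in \<mu>. poly p x = 0" by simp
  have zint: "(\<integral>x. poly (p * h) x \<partial>\<mu>) = 0" for h
    by (rule integral_eq_zero_AE) (use AEp in auto)
  have zxint: "(\<integral>x. x * poly (p * h) x \<partial>\<mu>) = 0" for h
    by (rule integral_eq_zero_AE) (use AEp in auto)
  obtain r where r: "Lop \<mu> (poly p) = poly r" using mu.Lop_ex by blast
  have r0: "r \<noteq> 0"
  proof
    assume "r = 0"
    have "poly p x = 0" for x
    proof -
      have "\<gamma> * Lop \<nu> (Lop \<mu> (poly p)) x - (x - \<beta>) * Lop \<mu> (poly p) x = - poly p x + (\<integral>y. poly p y \<partial>\<mu>)"
        by (rule T_ident)
      moreover have "(\<integral>y. poly p y \<partial>\<mu>) = 0" using zint[of 1] by simp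
      ultimately show ?thesis using \<open>r = 0\<close> by (simp add: r nu.Lop_zero)
    qed
    then have "p = 0" using poly_all_0_iff_0 by blast
    then show False using p by simp
  qed
  have Lh: "Lop \<mu> (poly (p * h)) y = poly h y * poly r y" for h y
  proof -
    have "(\<integral>x. diff_quot (poly (p * h)) y x \<partial>\<mu>) - (\<integral>x. poly h y * diff_quot (poly p) y x \<partial>\<mu>)
        = (\<integral>x. diff_quot (poly (p * h)) y x - poly h y * diff_quot (poly p) y x \<partial>\<mu>)"
      by (rule Bochner_Integration.integral_diff[symmetric]) (auto intro!: mu.int_dq)
    also have "\<dots> = 0"
      by (rule integral_eq_zero_AE) (use AEp in \<open>auto simp: dq_mult_zero\<close>)
    finally have "Lop \<mu> (poly (p * h)) y = poly h y * Lop \<mu> (poly p) y"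
      unfolding Lop_def by simp
    then show ?thesis by (simp add: r)
  qed
  have hr: "(\<integral>y. poly h y * poly r y \<partial>\<nu>) = 0" for h
  proof -
    have "(\<integral>x. x * poly (p * h) x \<partial>\<mu>) = \<beta> * (\<integral>x. poly (p * h) x \<partial>\<mu>) + \<gamma> * (\<integral>y. Lop \<mu> (poly (p * h)) y \<partial>\<nu>)"
      by (rule star)
    then have "0 = \<beta> * 0 + \<gamma> * (\<integral>y. poly h y * poly r y \<partial>\<nu>)"
      by (simp only: zint zxint Lh)
    then have "\<gamma> * (\<integral>y. poly h y * poly r y \<partial>\<nu>) = 0" by simp
    then show ?thesis using gpos by simp
  qed
  have "AE y in \<nu>. poly r y * poly r y = 0"
    using hr[of r] by (subst (asm) integral_nonneg_eq_0_iff_AE) (auto intro!: nu.int_cont continuous_intros)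
  then have AEr: "AE y in \<nu>. poly r y = 0" by simp
  define U where "U = {y. poly r y \<noteq> 0}"
  have openU: "open U" unfolding U_def
    by (rule open_Collect_neq) (intro continuous_intros)+
  have U0: "emeasure \<nu> U = 0"
  proof -
    have Us: "U \<in> sets \<nu>" using openU by (simp add: nu.sets_M)
    have Ueq: "{x \<in> space \<nu>. \<not> poly r x = 0} = U" by (simp add: U_def space_nu)
    show ?thesis using AE_iff_measurable[OF Us Ueq] AEr by simp
  qed
  have "msupport \<nu> \<subseteq> {y. poly r y = 0}"
  proof
    fix y assume y: "y \<in> msupport \<nu>"
    show "y \<in> {y. poly r y = 0}"
    proof (rule ccontr)
      assume "y \<notin> {y. poly r y = 0}"
      then have "y \<in> U" by (simp add: U_def)
      then obtain e where e: "e > 0" "ball y e \<subseteq> U" using openU open_contains_ball by blast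
      have "emeasure \<nu> (ball y e) \<le> emeasure \<nu> U"
        by (rule emeasure_mono[OF e(2)]) (use openU in \<open>simp add: nu.sets_M\<close>)
      then have "emeasure \<nu> (ball y e) = 0" using U0 by simp
      moreover have "emeasure \<nu> (ball y e) > 0" using y e unfolding msupport_def by auto
      ultimately show False by simp
    qed
  qed
  moreover have "finite {y. poly r y = 0}" by (rule poly_roots_finite[OF r0])
  ultimately show False using inf finite_subset by blast
qed

end

definition ipM :: "real measure \<Rightarrow> real poly \<Rightarrow> real poly \<Rightarrow> real" where
  "ipM M p q = (\<integral>x. poly p x * poly q x \<partial>M)"

context bmeas begin

lemma int_pp: "integrable M (\<lambda>x. poly p x * poly q x)"
  by (rule int_cont) (intro continuous_intros)

lemma ip_sym: "ipM M p q = ipM M q p"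
  by (simp add: ipM_def mult.commute)

lemma ip_add2: "ipM M f (p + q) = ipM M f p + ipM M f q"
  unfolding ipM_def by (simp add: distrib_left Bochner_Integration.integral_add[OF int_pp int_pp])

lemma ip_smult2: "ipM M f (smult a p) = a * ipM M f p"
  unfolding ipM_def by (simp add: algebra_simps)

lemma ip_zero2: "ipM M f 0 = 0"
  unfolding ipM_def by simp

lemma ip_diff1: "ipM M (p - q) g = ipM M p g - ipM M q g"
  unfolding ipM_def by (simp add: left_diff_distrib Bochner_Integration.integral_diff[OF int_pp int_pp])

lemma ip_sum1: "ipM M (\<Sum>k\<in>I. smult (c k) (P k)) g = (\<Sum>k\<in>I. c k * ipM M (P k) g)"
proof (induction I rule: infinite_finite_induct)
  case (infinite I) then show ?case by (simp add: ipM_def)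
next
  case empty then show ?case by (simp add: ipM_def)
next
  case (insert k I)
  have "ipM M (smult (c k) (P k) + (\<Sum>k\<in>I. smult (c k) (P k))) g
      = c k * ipM M (P k) g + ipM M (\<Sum>k\<in>I. smult (c k) (P k)) g"
    using ip_sym ip_add2 ip_smult2 by metis
  then show ?case using insert by simp
qed

lemma span_orth:
  assumes P: "\<And>k. k \<le> n \<Longrightarrow> degree (P k) = k \<and> lead_coeff (P k) = 1"
    and orth: "\<And>j. j \<le> n \<Longrightarrow> ipM M f (P j) = 0"
  shows "degree q \<le> n \<Longrightarrow> ipM M f q = 0"
proof (induction "degree q" arbitrary: q rule: less_induct)
  case less
  define d where "d = degree q"
  define q' where "q' = q - smult (lead_coeff q) (P d)"
  have Pd0: "degree (P d) = d \<and> lead_coeff (P d) = 1" using P[of d] less.prems unfolding d_def by blast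
  then have Pd: "degree (P d) = d" "lead_coeff (P d) = 1" by blast+
  have dq': "degree q' \<le> d"
    unfolding q'_def by (rule degree_diff_le) (use Pd(1) degree_smult_le[of "lead_coeff q" "P d"] in \<open>auto simp: d_def\<close>)
  have cq': "coeff q' d = 0"
    using Pd by (simp add: q'_def d_def)
  have ipq': "ipM M f q' = 0"
  proof (cases "q' = 0")
    case True then show ?thesis by (simp add: ip_zero2)
  next
    case False
    have "degree q' \<noteq> d"
    proof
      assume "degree q' = d"
      then have "lead_coeff q' = 0" using cq' by simp
      then show False using False by simp
    qed
    then have lt: "degree q' < degree q" using dq' by (simp add: d_def)
    then show ?thesis using less.hyps[OF lt] less.prems by simp
  qed
  have qeq: "q' + smult (lead_coeff q) (P d) = q" by (simp add: q'_def)
  have "ipM M f (q' + smult (lead_coeff q) (P d)) = ipM M f q' + lead_coeff q * ipM M f (P d)"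
    by (simp add: ip_add2 ip_smult2)
  then have "ipM M f q = ipM M f q' + lead_coeff q * ipM M f (P d)"
    by (simp only: qeq)
  then show ?case using ipq' orth[of d] less.prems by (simp add: d_def)
qed

lemma OP_exists:
  assumes pos: "\<And>p. p \<noteq> 0 \<Longrightarrow> ipM M p p > 0"
  shows "\<exists>P. \<forall>k\<le>n. degree (P k) = k \<and> lead_coeff (P k) = 1 \<and> (\<forall>q. degree q < k \<longrightarrow> ipM M (P k) q = 0)"
proof (induction n)
  case 0
  show ?case by (rule exI[of _ "\<lambda>_. 1"]) auto
next
  case (Suc n)
  then obtain P where P: "\<And>k. k \<le> n \<Longrightarrow> degree (P k) = k \<and> lead_coeff (P k) = 1 \<and> (\<forall>q. degree q < k \<longrightarrow> ipM M (P k) q = 0)"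
    by blast
  define c where "c k = ipM M (monom 1 (Suc n)) (P k) / ipM M (P k) (P k)" for k
  define s where "s = (\<Sum>k\<le>n. smult (c k) (P k))"
  define Pn where "Pn = monom 1 (Suc n) - s"
  have ds: "degree s \<le> n"
    unfolding s_def
  proof (rule degree_sum_le)
    fix k assume "k \<in> {..n}"
    then show "degree (smult (c k) (P k)) \<le> n" using degree_smult_le[of "c k" "P k"] P[of k] by simp
  qed simp
  have dPn: "degree Pn = Suc n"
  proof -
    have "degree (-s) < degree (monom (1::real) (Suc n))" using ds by (simp add: degree_monom_eq)
    then show ?thesis unfolding Pn_def using degree_add_eq_left[of "-s" "monom 1 (Suc n)"]
      by (simp add: degree_monom_eq)
  qed
  have lPn: "lead_coeff Pn = 1"
  proof -
    have "coeff s (Suc n) = 0" using ds by (intro coeff_eq_0) simp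
    then show ?thesis using dPn by (simp add: Pn_def)
  qed
  have Pne: "P k \<noteq> 0" if "k \<le> n" for k
    using P[OF that] by auto
  have orthP: "ipM M (P k) (P j) = 0" if "k \<le> n" "j \<le> n" "k \<noteq> j" for k j
  proof (cases "j < k")
    case True then show ?thesis using P[OF that(1)] P[OF that(2)] by simp
  next
    case False then have kj: "k < j" using that by simp
    have "ipM M (P j) (P k) = 0" using P[OF that(2)] P[OF that(1)] kj by simp
    then show ?thesis by (simp add: ip_sym)
  qed
  have orthPn: "ipM M Pn (P j) = 0" if j: "j \<le> n" for j
  proof -
    have "ipM M s (P j) = (\<Sum>k\<le>n. c k * ipM M (P k) (P j))"
      unfolding s_def by (rule ip_sum1)
    also have "\<dots> = (\<Sum>k\<le>n. if k = j then c j * ipM M (P j) (P j) else 0)"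
      by (rule sum.cong) (auto simp: orthP j)
    also have "\<dots> = c j * ipM M (P j) (P j)" using j by simp
    also have "\<dots> = ipM M (monom 1 (Suc n)) (P j)"
      using pos[OF Pne[OF j]] by (simp add: c_def)
    finally show ?thesis unfolding Pn_def by (simp add: ip_diff1)
  qed
  have "\<forall>q. degree q < Suc n \<longrightarrow> ipM M Pn q = 0"
  proof (intro allI impI)
    fix q :: "real poly" assume dq: "degree q < Suc n"
    have P1: "\<And>k. k \<le> n \<Longrightarrow> degree (P k) = k \<and> lead_coeff (P k) = 1" using P by blast
    have dqn: "degree q \<le> n" using dq by simp
    show "ipM M Pn q = 0"
      using span_orth[OF P1 orthPn dqn] .
  qed
  then have PnQ: "degree Pn = Suc n \<and> lead_coeff Pn = 1 \<and> (\<forall>q. degree q < Suc n \<longrightarrow> ipM M Pn q = 0)"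
    using dPn lPn by blast
  have "\<forall>k\<le>Suc n. degree ((P(Suc n := Pn)) k) = k \<and> lead_coeff ((P(Suc n := Pn)) k) = 1
      \<and> (\<forall>q. degree q < k \<longrightarrow> ipM M ((P(Suc n := Pn)) k) q = 0)"
  proof (intro allI impI)
    fix k assume k: "k \<le> Suc n"
    show "degree ((P(Suc n := Pn)) k) = k \<and> lead_coeff ((P(Suc n := Pn)) k) = 1
      \<and> (\<forall>q. degree q < k \<longrightarrow> ipM M ((P(Suc n := Pn)) k) q = 0)"
    proof (cases "k = Suc n")
      case True
      have e: "(P(Suc n := Pn)) k = Pn" by (simp add: True)
      show ?thesis unfolding e using PnQ True by blast
    next
      case False then have kn: "k \<le> n" using k by simp
      have e: "(P(Suc n := Pn)) k = P k" using False by simp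
      show ?thesis unfolding e using P kn by blast
    qed
  qed
  then show ?case by blast
qed

lemma OP_unique:
  assumes pos: "\<And>p. p \<noteq> 0 \<Longrightarrow> ipM M p p > 0"
    and p1: "degree p1 = n" "lead_coeff p1 = 1" "\<forall>q. degree q < n \<longrightarrow> ipM M p1 q = 0"
    and p2: "degree p2 = n" "lead_coeff p2 = 1" "\<forall>q. degree q < n \<longrightarrow> ipM M p2 q = 0"
  shows "p1 = p2"
proof (rule ccontr)
  assume ne: "p1 \<noteq> p2"
  define d where "d = p1 - p2"
  have d0: "d \<noteq> 0" using ne by (simp add: d_def)
  have "degree d \<le> n" unfolding d_def by (rule degree_diff_le) (simp_all add: p1 p2)
  moreover have "coeff d n = 0" using p1 p2 by (simp add: d_def)
  moreover have "degree d \<noteq> n"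
  proof
    assume "degree d = n"
    then have "lead_coeff d = 0" using \<open>coeff d n = 0\<close> by simp
    then show False using d0 by simp
  qed
  ultimately have "degree d < n" by simp
  then have "ipM M p1 d = 0" "ipM M p2 d = 0" using p1 p2 by auto
  then have "ipM M d d = 0" by (simp add: d_def ip_diff1)
  then show False using pos[OF d0] by simp
qed

lemma monic_OP_props:
  assumes pos: "\<And>p. p \<noteq> 0 \<Longrightarrow> ipM M p p > 0"
  shows "degree (monic_OP M n) = n \<and> lead_coeff (monic_OP M n) = 1
     \<and> (\<forall>q. degree q < n \<longrightarrow> ipM M (monic_OP M n) q = 0)"
proof -
  define Q where "Q p \<longleftrightarrow> degree p = n \<and> lead_coeff p = 1 \<and> (\<forall>q. degree q < n \<longrightarrow> ipM M p q = 0)" for p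
  have mo: "monic_OP M n = (THE p. Q p)"
    unfolding monic_OP_def Q_def ipM_def by (rule refl)
  obtain P where P: "\<forall>k\<le>n. degree (P k) = k \<and> lead_coeff (P k) = 1 \<and> (\<forall>q. degree q < k \<longrightarrow> ipM M (P k) q = 0)"
    using OP_exists[OF pos] by blast
  have "Q (P n)" using P unfolding Q_def by blast
  moreover have "p1 = p2" if "Q p1" "Q p2" for p1 p2
  proof -
    have a: "degree p1 = n" "lead_coeff p1 = 1" "\<forall>q. degree q < n \<longrightarrow> ipM M p1 q = 0"
      using that(1) unfolding Q_def by blast+
    have b: "degree p2 = n" "lead_coeff p2 = 1" "\<forall>q. degree q < n \<longrightarrow> ipM M p2 q = 0"
      using that(2) unfolding Q_def by blast+
    show ?thesis by (rule OP_unique[OF pos a b])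
  qed
  ultimately have "\<exists>!p. Q p" by blast
  then have "Q (THE p. Q p)" by (rule theI')
  then show ?thesis unfolding mo Q_def .
qed

end

theorem proposition4p4:
  fixes \<nu> \<mu> :: "real measure" and \<beta> \<gamma> :: real
  assumes "prob_space \<nu>" and "sets \<nu> = sets borel"
    and "compact (msupport \<nu>)" and "infinite (msupport \<nu>)"
    and "\<gamma> > 0"
    and "is_Phi \<beta> \<gamma> \<nu> \<mu>"
  defines "Q \<equiv> (\<lambda>f x. Lop \<nu> (Lop \<mu> f) x - (x - \<beta>) / \<gamma> * Lop \<mu> f x)"
  shows "(\<forall>n\<ge>1. \<forall>x. Q (poly (monic_OP \<mu> n)) x = - poly (monic_OP \<mu> n) x / \<gamma>)
       \<and> (\<forall>x. Q (poly (monic_OP \<mu> 0)) x = 0)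
       \<and> (\<forall>f :: real poly. \<forall>x. Q (poly f) x = (- poly f x + (\<integral>y. poly f y \<partial>\<mu>)) / \<gamma>)"
proof -
  note nu_prob = assms(1) and nu_sets = assms(2) and cpt = assms(3) and inf = assms(4)
    and gpos = assms(5) and phi = assms(6)
  have mu_prob: "prob_space \<mu>" and mu_sets: "sets \<mu> = sets borel"
    and ident: "\<And>z. Im z \<noteq> 0 \<Longrightarrow> cauchy_transform \<mu> z
         = 1 / (z - complex_of_real \<beta> - complex_of_real \<gamma> * cauchy_transform \<nu> z)"
    using phi unfolding is_Phi_def by auto
  obtain a where a: "\<forall>x\<in>msupport \<nu>. norm x \<le> a"
    using compact_imp_bounded[OF cpt] bounded_iff by blast
  define R where "R = max a 1"
  have R: "R > 0" "msupport \<nu> \<subseteq> cball 0 R"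
    using a by (auto simp: R_def dist_real_def intro: le_max_iff_disj[THEN iffD2])
  have nuAE: "AE x in \<nu>. \<bar>x\<bar> \<le> R" by (rule msupport_AE[OF nu_sets R(2)])
  have bnuR: "bmeas \<nu> R"
    by (intro bmeas.intro bmeas_axioms.intro nu_prob nu_sets nuAE) (use R in simp)
  interpret P0: phi0 \<nu> R \<mu> \<beta> \<gamma>
    by (intro phi0.intro phi0_axioms.intro bnuR mu_prob mu_sets gpos ident) auto
  define T0 where "T0 = R + \<bar>\<beta>\<bar> + \<gamma> + 2"
  have muAE: "AE x in \<mu>. \<bar>x\<bar> \<le> T0" unfolding T0_def by (rule P0.mu_AE_bound)
  define S where "S = max R T0"
  have bnu: "bmeas \<nu> S"
    by (intro bmeas.intro bmeas_axioms.intro nu_prob nu_sets)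
       (use nuAE R in \<open>auto simp: S_def elim!: AE_mp\<close>)
  have bmu: "bmeas \<mu> S"
    by (intro bmeas.intro bmeas_axioms.intro mu_prob mu_sets)
       (use muAE R in \<open>auto simp: S_def elim!: AE_mp\<close>)
  interpret P1: phi1 \<nu> \<mu> S \<beta> \<gamma>
    by (intro phi1.intro phi1_axioms.intro bnu bmu gpos ident) auto
  have third: "Q (poly f) x = (- poly f x + (\<integral>y. poly f y \<partial>\<mu>)) / \<gamma>" for f x
  proof -
    have "\<gamma> * Lop \<nu> (Lop \<mu> (poly f)) x - (x - \<beta>) * Lop \<mu> (poly f) x = - poly f x + (\<integral>y. poly f y \<partial>\<mu>)"
      by (rule P1.T_ident)
    then show ?thesis unfolding Q_def using gpos by (simp add: field_simps)
  qed
  have pos: "\<And>p. p \<noteq> 0 \<Longrightarrow> ipM \<mu> p p > 0" unfolding ipM_def by (rule P1.pos_def[OF inf])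
  note props = bmeas.monic_OP_props[OF bmu pos]
  have first: "Q (poly (monic_OP \<mu> n)) x = - poly (monic_OP \<mu> n) x / \<gamma>" if n: "n \<ge> 1" for n x
  proof -
    have "ipM \<mu> (monic_OP \<mu> n) 1 = 0" using props[of n] n by simp
    then have "(\<integral>y. poly (monic_OP \<mu> n) y \<partial>\<mu>) = 0" by (simp add: ipM_def)
    then show ?thesis by (simp add: third)
  qed
  have second: "Q (poly (monic_OP \<mu> 0)) x = 0" for x
  proof -
    have d0: "degree (monic_OP \<mu> 0) = 0 \<and> lead_coeff (monic_OP \<mu> 0) = 1" using props[of 0] by blast
    then have d: "degree (monic_OP \<mu> 0) = 0" "lead_coeff (monic_OP \<mu> 0) = 1" by blast+
    have "monic_OP \<mu> 0 = [:coeff (monic_OP \<mu> 0) 0:]" using d(1) by (rule degree_0_id[symmetric])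
    also have "coeff (monic_OP \<mu> 0) 0 = 1" using d(2) unfolding d(1) .
    finally have "monic_OP \<mu> 0 = 1" by (simp add: one_pCons)
    then show ?thesis by (simp add: third prob_space.prob_space[OF mu_prob])
  qed
  show ?thesis using first second third by blast
qed


end
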